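(* Let $r>0$, $\sigma\ge0$, $\kappa>0$, $\tau>0$, $p\in[0,1]$ with $\varepsilon=pe^{-\tau}<1$, and $q_c=1-\frac{1}{r}\frac{1}{1-\varepsilon}$. Let $\eta,q\in\mathbb{R}$, $u(\eta,q)=(1-\eta-q,\eta,0,q)$, and let $\mathcal{F}^*_{\eta,q}=\{\phi\in\mathcal{C}^*: H^*(\phi)=H^*(\widehat{u(\eta,q)})\}$ be the level set of $H^*=(H_1^*,H_2^* )$ containing $\widehat{u(\eta,q)}$. Then: (1) $\mathcal{F}^*_{\eta,q}\cap\mathcal{E}^*_0=\{\widehat{u(\eta,q)}\}$. (2) $\mathcal{F}^*_{\eta,q}\cap\mathcal{E}^*_I=\{\widehat{v(\eta,q)}\}$, where $v(\eta,q)=(v_S,v_E(\eta,q),v_I(\eta,q),v_Q(\eta,q))$ with $v_S=\frac{1}{r(1-\varepsilon)}$ and \[ v_E(\eta,q)=\frac{\sigma}{1-\varepsilon+\sigma+\varepsilon\kappa}(q_c-q-\eta)+\eta,\qquad v_I(\eta,q)=\frac{1-\varepsilon}{1-\varepsilon+\sigma+\varepsilon\kappa}(q_c-q-\eta), \] \[ v_Q(\eta,q)=\frac{\varepsilon\kappa}{1-\varepsilon+\sigma+\varepsilon\kappa}(q_c-q-\eta)+q. \]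
   Context: The SEIQ system is \[ \dot S(t)=-rS(t)I(t)+I(t)+r\varepsilon S(t-\sigma-\tau-\kappa)I(t-\sigma-\tau-\kappa),\qquad \dot E(t)=rS(t)I(t)-rS(t-\sigma)I(t-\sigma), \] \[ \dot I(t)=rS(t-\sigma)I(t-\sigma)-I(t)-r\varepsilon S(t-\sigma-\tau)I(t-\sigma-\tau), \] \[ \dot Q(t)=r\varepsilon\big[S(t-\sigma-\tau)I(t-\sigma-\tau)-S(t-\sigma-\tau-\kappa)I(t-\sigma-\tau-\kappa)\big], \] on $\mathcal{C}^*=\{\phi\in C([-\sigma-\tau-\kappa,0],\mathbb{R}^4):\phi_S+\phi_E+\phi_I+\phi_Q\equiv1\}$. For $u\in\mathbb{R}^4$, $\hat u$ is the constant function with value $u$. $\mathcal{E}^*_0=\{\hat\phi\in\mathcal{C}^*\text{ constant}:\phi_I=0\}$ and $\mathcal{E}^*_I=\{\hat\phi\in\mathcal{C}^*\text{ constant}:\phi_S=\frac{1}{r(1-\varepsilon)}\}$. The functionals are $H_1^*(\phi)=1-\phi_S(0)-\phi_E(0)-\phi_I(-\kappa)+\int_{-\kappa}^{0}\phi_I(s)ds-r\int_{-\sigma-\kappa}^{-\sigma}\phi_S(s)\phi_I(s)ds$ and $H_2^*(\phi)=\phi_E(0)-r\int_{-\sigma}^{0}\phi_S(s)\phi_I(s)ds$. *)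

theory Defs
  imports "HOL-Analysis.Analysis"
begin

text \<open>A phase-space element phi = (phi_S, phi_E, phi_I, phi_Q) is given by four real
functions; only their values on the history interval [-sigma-tau-kappa, 0] matter.\<close>

definition hist :: "real \<Rightarrow> real \<Rightarrow> real \<Rightarrow> real set" where
  "hist \<sigma> \<tau> \<kappa> = {-\<sigma>-\<tau>-\<kappa>..0}"

definition inCstar :: "real \<Rightarrow> real \<Rightarrow> real \<Rightarrow>
    (real \<Rightarrow> real) \<Rightarrow> (real \<Rightarrow> real) \<Rightarrow> (real \<Rightarrow> real) \<Rightarrow> (real \<Rightarrow> real) \<Rightarrow> bool" where
  "inCstar \<sigma> \<tau> \<kappa> S E I Q \<longleftrightarrow>
     continuous_on (hist \<sigma> \<tau> \<kappa>) S \<and> continuous_on (hist \<sigma> \<tau> \<kappa>) E \<and>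
     continuous_on (hist \<sigma> \<tau> \<kappa>) I \<and> continuous_on (hist \<sigma> \<tau> \<kappa>) Q \<and>
     (\<forall>s\<in>hist \<sigma> \<tau> \<kappa>. S s + E s + I s + Q s = 1)"

definition H1 :: "real \<Rightarrow> real \<Rightarrow> real \<Rightarrow>
    (real \<Rightarrow> real) \<Rightarrow> (real \<Rightarrow> real) \<Rightarrow> (real \<Rightarrow> real) \<Rightarrow> (real \<Rightarrow> real) \<Rightarrow> real" where
  "H1 r \<sigma> \<kappa> S E I Q = 1 - S 0 - E 0 - I (-\<kappa>) + integral {-\<kappa>..0} I
       - r * integral {-\<sigma>-\<kappa>..-\<sigma>} (\<lambda>s. S s * I s)"

definition H2 :: "real \<Rightarrow> real \<Rightarrow>
    (real \<Rightarrow> real) \<Rightarrow> (real \<Rightarrow> real) \<Rightarrow> (real \<Rightarrow> real) \<Rightarrow> (real \<Rightarrow> real) \<Rightarrow> real" where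
  "H2 r \<sigma> S E I Q = E 0 - r * integral {-\<sigma>..0} (\<lambda>s. S s * I s)"

definition is_const :: "real \<Rightarrow> real \<Rightarrow> real \<Rightarrow>
    (real \<Rightarrow> real) \<Rightarrow> (real \<Rightarrow> real) \<Rightarrow> (real \<Rightarrow> real) \<Rightarrow> (real \<Rightarrow> real) \<Rightarrow> bool" where
  "is_const \<sigma> \<tau> \<kappa> S E I Q \<longleftrightarrow> (\<exists>a b c d. \<forall>s\<in>hist \<sigma> \<tau> \<kappa>.
      S s = a \<and> E s = b \<and> I s = c \<and> Q s = d)"

definition in_level :: "real \<Rightarrow> real \<Rightarrow> real \<Rightarrow> real \<Rightarrow> real \<Rightarrow> real \<Rightarrow>
    (real \<Rightarrow> real) \<Rightarrow> (real \<Rightarrow> real) \<Rightarrow> (real \<Rightarrow> real) \<Rightarrow> (real \<Rightarrow> real) \<Rightarrow> bool" where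
  "in_level r \<sigma> \<tau> \<kappa> \<eta> q S E I Q \<longleftrightarrow> inCstar \<sigma> \<tau> \<kappa> S E I Q \<and>
     H1 r \<sigma> \<kappa> S E I Q = H1 r \<sigma> \<kappa> (\<lambda>_. 1 - \<eta> - q) (\<lambda>_. \<eta>) (\<lambda>_. 0) (\<lambda>_. q) \<and>
     H2 r \<sigma> S E I Q = H2 r \<sigma> (\<lambda>_. 1 - \<eta> - q) (\<lambda>_. \<eta>) (\<lambda>_. 0) (\<lambda>_. q)"

end

theory Submission
  imports Defs
begin

lemma int_const_on:
  fixes f :: "real \<Rightarrow> real"
  assumes "x \<le> y" "\<forall>s\<in>{x..y}. f s = c"
  shows "integral {x..y} f = (y - x) * c"
proof -
  have "integral {x..y} f = integral {x..y} (\<lambda>_. c)"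
    using assms(2) by (intro integral_cong) auto
  also have "\<dots> = (y - x) * c" using assms(1) by simp
  finally show ?thesis .
qed

lemma H_const:
  fixes r \<sigma> \<tau> \<kappa> :: real
  assumes "\<sigma> \<ge> 0" "\<tau> > 0" "\<kappa> > 0"
    and c: "\<forall>s\<in>hist \<sigma> \<tau> \<kappa>. S s = a \<and> E s = b \<and> I s = c \<and> Q s = d"
  shows "H1 r \<sigma> \<kappa> S E I Q = 1 - a - b - c + \<kappa> * c - r * (\<kappa> * (a * c))"
    and "H2 r \<sigma> S E I Q = b - r * (\<sigma> * (a * c))"
proof -
  have h0: "0 \<in> hist \<sigma> \<tau> \<kappa>" "-\<kappa> \<in> hist \<sigma> \<tau> \<kappa>"
    using assms unfolding hist_def by auto
  have i1: "integral {-\<kappa>..0} I = \<kappa> * c"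
    using int_const_on[of "-\<kappa>" 0 I c] c assms unfolding hist_def by auto
  have i2: "integral {-\<sigma>-\<kappa>..-\<sigma>} (\<lambda>s. S s * I s) = \<kappa> * (a * c)"
    using int_const_on[of "-\<sigma>-\<kappa>" "-\<sigma>" "\<lambda>s. S s * I s" "a*c"] c assms unfolding hist_def by auto
  have i3: "integral {-\<sigma>..0} (\<lambda>s. S s * I s) = \<sigma> * (a * c)"
    using int_const_on[of "-\<sigma>" 0 "\<lambda>s. S s * I s" "a*c"] c assms unfolding hist_def by auto
  show "H1 r \<sigma> \<kappa> S E I Q = 1 - a - b - c + \<kappa> * c - r * (\<kappa> * (a * c))"
    unfolding H1_def using i1 i2 h0 c by auto
  show "H2 r \<sigma> S E I Q = b - r * (\<sigma> * (a * c))"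
    unfolding H2_def using i3 h0 c by auto
qed

lemma inC_const:
  assumes "\<forall>s\<in>hist \<sigma> \<tau> \<kappa>. S s = a \<and> E s = b \<and> I s = c \<and> Q s = d" "a + b + c + d = 1"
  shows "inCstar \<sigma> \<tau> \<kappa> S E I Q"
proof -
  have "continuous_on (hist \<sigma> \<tau> \<kappa>) S" using continuous_on_cong[of _ _ S "\<lambda>_. a"] assms by auto
  moreover have "continuous_on (hist \<sigma> \<tau> \<kappa>) E" using continuous_on_cong[of _ _ E "\<lambda>_. b"] assms by auto
  moreover have "continuous_on (hist \<sigma> \<tau> \<kappa>) I" using continuous_on_cong[of _ _ I "\<lambda>_. c"] assms by auto
  moreover have "continuous_on (hist \<sigma> \<tau> \<kappa>) Q" using continuous_on_cong[of _ _ Q "\<lambda>_. d"] assms by auto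
  ultimately show ?thesis unfolding inCstar_def using assms by auto
qed

lemma hist_ne: "\<sigma> \<ge> 0 \<Longrightarrow> \<tau> > 0 \<Longrightarrow> \<kappa> > 0 \<Longrightarrow> 0 \<in> hist \<sigma> \<tau> \<kappa>"
  unfolding hist_def by auto

theorem theorem12:
  fixes r \<sigma> \<kappa> \<tau> p \<epsilon> qc \<eta> q :: real
  assumes "r > 0" and "\<sigma> \<ge> 0" and "\<kappa> > 0" and "\<tau> > 0"
    and "0 \<le> p" and "p \<le> 1"
    and eps: "\<epsilon> = p * exp (- \<tau>)" and "\<epsilon> < 1"
    and qc: "qc = 1 - (1 / r) * (1 / (1 - \<epsilon>))"
  shows
    "(\<forall>S E I Q. (in_level r \<sigma> \<tau> \<kappa> \<eta> q S E I Q \<and>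
        is_const \<sigma> \<tau> \<kappa> S E I Q \<and> (\<forall>s\<in>hist \<sigma> \<tau> \<kappa>. I s = 0))
      \<longleftrightarrow> (\<forall>s\<in>hist \<sigma> \<tau> \<kappa>. S s = 1 - \<eta> - q \<and> E s = \<eta> \<and> I s = 0 \<and> Q s = q))
   \<and>
    (\<forall>S E I Q. (in_level r \<sigma> \<tau> \<kappa> \<eta> q S E I Q \<and>
        is_const \<sigma> \<tau> \<kappa> S E I Q \<and> (\<forall>s\<in>hist \<sigma> \<tau> \<kappa>. S s = 1 / (r * (1 - \<epsilon>))))
      \<longleftrightarrow> (\<forall>s\<in>hist \<sigma> \<tau> \<kappa>.
             S s = 1 / (r * (1 - \<epsilon>)) \<and>
             E s = \<sigma> / (1 - \<epsilon> + \<sigma> + \<epsilon> * \<kappa>) * (qc - q - \<eta>) + \<eta> \<and>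
             I s = (1 - \<epsilon>) / (1 - \<epsilon> + \<sigma> + \<epsilon> * \<kappa>) * (qc - q - \<eta>) \<and>
             Q s = (\<epsilon> * \<kappa>) / (1 - \<epsilon> + \<sigma> + \<epsilon> * \<kappa>) * (qc - q - \<eta>) + q))"
proof -
  have Hu1: "H1 r \<sigma> \<kappa> (\<lambda>_. 1 - \<eta> - q) (\<lambda>_. \<eta>) (\<lambda>_. 0) (\<lambda>_. q) = q"
    using H_const(1)[of \<sigma> \<tau> \<kappa> "\<lambda>_. 1 - \<eta> - q" "1 - \<eta> - q" "\<lambda>_. \<eta>" \<eta> "\<lambda>_. 0" 0 "\<lambda>_. q" q r] assms by simp
  have Hu2: "H2 r \<sigma> (\<lambda>_. 1 - \<eta> - q) (\<lambda>_. \<eta>) (\<lambda>_. 0) (\<lambda>_. q) = \<eta>"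
    using H_const(2)[of \<sigma> \<tau> \<kappa> "\<lambda>_. 1 - \<eta> - q" "1 - \<eta> - q" "\<lambda>_. \<eta>" \<eta> "\<lambda>_. 0" 0 "\<lambda>_. q" q r] assms by simp
  have h0: "0 \<in> hist \<sigma> \<tau> \<kappa>" using hist_ne assms by auto
  have epos: "\<epsilon> \<ge> 0" using eps assms by simp
  define D where "D = 1 - \<epsilon> + \<sigma> + \<epsilon> * \<kappa>"
  have Dpos: "D > 0" unfolding D_def using epos assms by (simp add: add_pos_nonneg)
  have e1: "1 - \<epsilon> > 0" using assms by simp
  have lvl: "in_level r \<sigma> \<tau> \<kappa> \<eta> q S E I Q \<longleftrightarrow>
      (a + b + c + d = 1 \<and> 1 - a - b - c + \<kappa> * c - r * (\<kappa> * (a * c)) = q \<and> b - r * (\<sigma> * (a * c)) = \<eta>)"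
    if C: "\<forall>s\<in>hist \<sigma> \<tau> \<kappa>. S s = a \<and> E s = b \<and> I s = c \<and> Q s = d" for S E I Q :: "real \<Rightarrow> real" and a b c d :: real
  proof -
    have "inCstar \<sigma> \<tau> \<kappa> S E I Q \<longleftrightarrow> a + b + c + d = 1"
      using inC_const[OF C] C h0 unfolding inCstar_def by (metis)
    then show ?thesis unfolding in_level_def Hu1 Hu2
      using H_const[OF assms(2,4,3) C] by simp
  qed
  show ?thesis
  proof (rule conjI; intro allI iffI)
    fix S E I Q :: "real \<Rightarrow> real"
    assume A: "in_level r \<sigma> \<tau> \<kappa> \<eta> q S E I Q \<and> is_const \<sigma> \<tau> \<kappa> S E I Q \<and> (\<forall>s\<in>hist \<sigma> \<tau> \<kappa>. I s = 0)"
    then obtain a b c d where C: "\<forall>s\<in>hist \<sigma> \<tau> \<kappa>. S s = a \<and> E s = b \<and> I s = c \<and> Q s = d"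
      unfolding is_const_def by blast
    have c0: "c = 0" using A C h0 by metis
    have "a + b + c + d = 1 \<and> 1 - a - b - c + \<kappa> * c - r * (\<kappa> * (a * c)) = q \<and> b - r * (\<sigma> * (a * c)) = \<eta>"
      using lvl[OF C] A by blast
    then have "a = 1 - \<eta> - q" "b = \<eta>" "d = q" using c0 by auto
    then show "\<forall>s\<in>hist \<sigma> \<tau> \<kappa>. S s = 1 - \<eta> - q \<and> E s = \<eta> \<and> I s = 0 \<and> Q s = q"
      using C c0 by auto
  next
    fix S E I Q :: "real \<Rightarrow> real"
    assume C: "\<forall>s\<in>hist \<sigma> \<tau> \<kappa>. S s = 1 - \<eta> - q \<and> E s = \<eta> \<and> I s = 0 \<and> Q s = q"
    have "is_const \<sigma> \<tau> \<kappa> S E I Q" unfolding is_const_def using C by blast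
    then show "in_level r \<sigma> \<tau> \<kappa> \<eta> q S E I Q \<and> is_const \<sigma> \<tau> \<kappa> S E I Q \<and> (\<forall>s\<in>hist \<sigma> \<tau> \<kappa>. I s = 0)"
      using lvl[OF C] C by simp
  next
    fix S E I Q :: "real \<Rightarrow> real"
    assume A: "in_level r \<sigma> \<tau> \<kappa> \<eta> q S E I Q \<and> is_const \<sigma> \<tau> \<kappa> S E I Q \<and> (\<forall>s\<in>hist \<sigma> \<tau> \<kappa>. S s = 1 / (r * (1 - \<epsilon>)))"
    then obtain a b c d where C: "\<forall>s\<in>hist \<sigma> \<tau> \<kappa>. S s = a \<and> E s = b \<and> I s = c \<and> Q s = d"
      unfolding is_const_def by blast
    have aa: "a = 1 / (r * (1 - \<epsilon>))" using A C h0 by metis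
    have eqs: "a + b + c + d = 1" "1 - a - b - c + \<kappa> * c - r * (\<kappa> * (a * c)) = q" "b - r * (\<sigma> * (a * c)) = \<eta>"
      using lvl[OF C] A by blast+
    have ra: "r * a = 1 / (1 - \<epsilon>)" using aa assms by simp
    have eb: "b = \<eta> + \<sigma> * c / (1 - \<epsilon>)"
    proof -
      have "b = \<eta> + \<sigma> * c * (r * a)" using eqs(3) by (simp add: algebra_simps)
      then show ?thesis unfolding ra by simp
    qed
    have ed: "d = q + \<epsilon> * \<kappa> * c / (1 - \<epsilon>)"
    proof -
      have "d = q - \<kappa> * c + \<kappa> * c * (r * a)" using eqs(1,2) by (simp add: algebra_simps)
      also have "\<dots> = q + \<epsilon> * \<kappa> * c / (1 - \<epsilon>)" unfolding ra using e1 by (simp add: field_simps)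
      finally show ?thesis .
    qed
    define x where "x = c / (1 - \<epsilon>)"
    have cx: "c = x * (1 - \<epsilon>)" unfolding x_def using e1 by simp
    have bx: "b = \<eta> + \<sigma> * x" unfolding eb x_def by simp
    have dx: "d = q + \<epsilon> * \<kappa> * x" unfolding ed x_def by simp
    have "qc - q - \<eta> = 1 - a - q - \<eta>" unfolding qc aa by simp
    also have "\<dots> = b + c + d - q - \<eta>" using eqs(1) by simp
    also have "\<dots> = x * D" unfolding bx cx dx D_def by (simp add: algebra_simps)
    finally have xD: "x = (qc - q - \<eta>) / D" using Dpos by (simp add: field_simps)
    have cc: "c = (1 - \<epsilon>) / D * (qc - q - \<eta>)" unfolding cx xD by simp
    have "b = \<sigma> / D * (qc - q - \<eta>) + \<eta>" unfolding bx xD by simp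
    moreover have "d = (\<epsilon> * \<kappa>) / D * (qc - q - \<eta>) + q" unfolding dx xD by simp
    ultimately show "\<forall>s\<in>hist \<sigma> \<tau> \<kappa>. S s = 1 / (r * (1 - \<epsilon>)) \<and>
             E s = \<sigma> / (1 - \<epsilon> + \<sigma> + \<epsilon> * \<kappa>) * (qc - q - \<eta>) + \<eta> \<and>
             I s = (1 - \<epsilon>) / (1 - \<epsilon> + \<sigma> + \<epsilon> * \<kappa>) * (qc - q - \<eta>) \<and>
             Q s = (\<epsilon> * \<kappa>) / (1 - \<epsilon> + \<sigma> + \<epsilon> * \<kappa>) * (qc - q - \<eta>) + q"
      using C cc aa unfolding D_def by auto
  next
    fix S E I Q :: "real \<Rightarrow> real"
    assume C0: "\<forall>s\<in>hist \<sigma> \<tau> \<kappa>. S s = 1 / (r * (1 - \<epsilon>)) \<and>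
             E s = \<sigma> / (1 - \<epsilon> + \<sigma> + \<epsilon> * \<kappa>) * (qc - q - \<eta>) + \<eta> \<and>
             I s = (1 - \<epsilon>) / (1 - \<epsilon> + \<sigma> + \<epsilon> * \<kappa>) * (qc - q - \<eta>) \<and>
             Q s = (\<epsilon> * \<kappa>) / (1 - \<epsilon> + \<sigma> + \<epsilon> * \<kappa>) * (qc - q - \<eta>) + q"
    define a where "a = 1 / (r * (1 - \<epsilon>))"
    define c where "c = (1 - \<epsilon>) / D * (qc - q - \<eta>)"
    define b where "b = \<sigma> / D * (qc - q - \<eta>) + \<eta>"
    define d where "d = (\<epsilon> * \<kappa>) / D * (qc - q - \<eta>) + q"
    have C: "\<forall>s\<in>hist \<sigma> \<tau> \<kappa>. S s = a \<and> E s = b \<and> I s = c \<and> Q s = d"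
      using C0 unfolding a_def b_def c_def d_def D_def by simp
    have ra: "r * a = 1 / (1 - \<epsilon>)" using a_def assms by simp
    define y where "y = (qc - q - \<eta>) / D"
    have yD: "y * D = qc - q - \<eta>" unfolding y_def using Dpos by simp
    have cy: "c = (1 - \<epsilon>) * y" unfolding c_def y_def by simp
    have by': "b = \<sigma> * y + \<eta>" unfolding b_def y_def by simp
    have dy: "d = \<epsilon> * \<kappa> * y + q" unfolding d_def y_def by simp
    have rac: "r * (a * c) = y"
    proof -
      have "r * (a * c) = (r * a) * c" by simp
      also have "\<dots> = c / (1 - \<epsilon>)" unfolding ra by simp
      also have "\<dots> = y" unfolding cy using e1 by simp
      finally show ?thesis .
    qed
    have qce: "qc = 1 - a" unfolding qc a_def by simp
    have "a + b + c + d = a + \<eta> + q + y * D" unfolding by' cy dy D_def by (simp add: algebra_simps)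
    then have s1: "a + b + c + d = 1" unfolding yD qce by simp
    have s2: "1 - a - b - c + \<kappa> * c - r * (\<kappa> * (a * c)) = q"
    proof -
      have "r * (\<kappa> * (a * c)) = \<kappa> * y" using rac by (metis mult.left_commute)
      moreover have "1 - a - b - c = d" using s1 by simp
      ultimately show ?thesis unfolding dy cy by (simp add: algebra_simps)
    qed
    have s3: "b - r * (\<sigma> * (a * c)) = \<eta>"
    proof -
      have "r * (\<sigma> * (a * c)) = \<sigma> * y" using rac by (metis mult.left_commute)
      then show ?thesis unfolding by' by linarith
    qed
    have "is_const \<sigma> \<tau> \<kappa> S E I Q" unfolding is_const_def using C by blast
    then show "in_level r \<sigma> \<tau> \<kappa> \<eta> q S E I Q \<and> is_const \<sigma> \<tau> \<kappa> S E I Q \<and> (\<forall>s\<in>hist \<sigma> \<tau> \<kappa>. S s = 1 / (r * (1 - \<epsilon>)))"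
      using lvl[OF C] s1 s2 s3 C0 by simp
  qed
qed

end
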